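(* With $\chi=1$ the trivial character, the restriction maps $j_1:\mathcal S^*(\overline{\mathcal O}_1)^{\chi}\to\mathcal S^*(\mathcal O_1)^{\chi}$ and $j_1':\mathcal S^*(\overline{\mathcal O}_1)^{\chi,\infty}\to\mathcal S^*(\mathcal O_1)^{\chi,\infty}$ are isomorphisms.
   Context: $F$ nonarchimedean local field of characteristic $0$, $G=G'=\mathrm{GL}_2(F)$ acting on $M_2:=M_{2\times2}(F)$ by $(g_1,g_2)\cdot M=g_1Mg_2^{-1}$. Let $\mathcal O_i\subset M_2$ be the set of matrices of rank $i$; $\overline{\mathcal O}_1=\mathcal O_1\cup\{0\}$. For a $G\times G'$-stable locally closed $X\subset M_2$, $\mathcal S(X)$ is the space of locally constant compactly supported functions on $X$ with $((g_1,g_2)f)(M)=f(g_1^{-1}Mg_2)$, and $\mathcal S^*(X)$ is its algebraic dual with the contragredient action. For a character $\chi$ of $G$, $\mathcal S^*(X)^\chi$ is the space of $G$-invariant vectors in $\mathcal S^*(X)\otimes(|\det|\boxtimes|\det|^{-1})\otimes\chi^{-1}$ (here $G$ is the first factor). A vector $v$ in a representation $V$ of $G$ is generalized $\chi$-invariant if there is $k\ge0$ with $(g_0-\chi(g_0))(g_1-\chi(g_1))\cdots(g_k-\chi(g_k))v=0$ for all $g_0,\dots,g_k\in G$; $\mathcal S^*(X)^{\chi,\infty}$ is the space of generalized $(G,\chi)$-invariant vectors in $\mathcal S^*(X)\otimes(|\det|\boxtimes|\det|^{-1})$. The maps $j_1,j_1'$ are induced by restriction of distributions from the closed set $\overline{\mathcal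 O}_1$ to its open subset $\mathcal O_1$. *)

theory Defs
  imports "HOL-Analysis.Analysis"
begin

text \<open>Nonarchimedean local fields of characteristic 0, presented as a field of
characteristic 0 (type class field_char_0) together with its normalized absolute value.\<close>

definition nonarch_abs :: "('a::field \<Rightarrow> real) \<Rightarrow> bool" where
  "nonarch_abs absF \<longleftrightarrow>
     absF 0 = 0 \<and> (\<forall>x. x \<noteq> 0 \<longrightarrow> absF x > 0) \<and>
     (\<forall>x y. absF (x * y) = absF x * absF y) \<and>
     (\<forall>x y. absF (x + y) \<le> max (absF x) (absF y)) \<and>
     (\<exists>x. absF x \<noteq> 0 \<and> absF x \<noteq> 1)"

text \<open>Local compactness (and completeness): the closed unit ball (ring of integers)
is (sequentially) compact for the metric induced by the absolute value.\<close>
definition nonarch_local_field :: "('a::field \<Rightarrow> real) \<Rightarrow> bool" where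
  "nonarch_local_field absF \<longleftrightarrow> nonarch_abs absF \<and>
     (\<forall>s::nat \<Rightarrow> _. (\<forall>n. absF (s n) \<le> 1) \<longrightarrow>
        (\<exists>r l. strict_mono r \<and> absF l \<le> 1 \<and> (\<lambda>n. absF (s (r n) - l)) \<longlonglongrightarrow> 0))"

text \<open>Normalization: the absolute value of a uniformizer is q^{-1}, where q is the
cardinality of the residue field (R is a set of residue representatives).\<close>
definition normalized_abs :: "('a::field \<Rightarrow> real) \<Rightarrow> bool" where
  "normalized_abs absF \<longleftrightarrow>
     (\<exists>w R. absF w < 1 \<and> (\<forall>x. absF x < 1 \<longrightarrow> absF x \<le> absF w) \<and>
        finite R \<and> (\<forall>x\<in>R. absF x \<le> 1) \<and>
        (\<forall>x\<in>R. \<forall>y\<in>R. x \<noteq> y \<longrightarrow> absF (x - y) = 1) \<and>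
        (\<forall>x. absF x \<le> 1 \<longrightarrow> (\<exists>y\<in>R. absF (x - y) < 1)) \<and>
        absF w = 1 / real (card R))"

type_synonym 'a mat2 = "'a ^ 2 ^ 2"

definition GL2 :: "'a::field mat2 set" where
  "GL2 = {g. det g \<noteq> 0}"

definition O1 :: "'a::field mat2 set" where
  "O1 = {M. M \<noteq> 0 \<and> det M = 0}"

definition O1bar :: "'a::field mat2 set" where
  "O1bar = {M. det M = 0}"

definition mclose :: "('a \<Rightarrow> real) \<Rightarrow> real \<Rightarrow> 'a::field mat2 \<Rightarrow> 'a mat2 \<Rightarrow> bool" where
  "mclose absF e N M \<longleftrightarrow> (\<forall>i j. absF (N $ i $ j - M $ i $ j) < e)"

definition seq_compact_in :: "('a::field \<Rightarrow> real) \<Rightarrow> 'a mat2 set \<Rightarrow> bool" where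
  "seq_compact_in absF K \<longleftrightarrow>
     (\<forall>s::nat \<Rightarrow> _. (\<forall>n. s n \<in> K) \<longrightarrow>
        (\<exists>r L. strict_mono r \<and> L \<in> K \<and>
           (\<forall>i j. (\<lambda>n. absF (s (r n) $ i $ j - L $ i $ j)) \<longlonglongrightarrow> 0)))"

text \<open>S(X): locally constant compactly supported functions on X, represented as
functions on M_2 vanishing outside X.\<close>
definition SX :: "('a::field \<Rightarrow> real) \<Rightarrow> 'a mat2 set \<Rightarrow> ('a mat2 \<Rightarrow> complex) set" where
  "SX absF X = {f. (\<forall>M. M \<notin> X \<longrightarrow> f M = 0) \<and>
       (\<forall>M\<in>X. \<exists>e>0. \<forall>N\<in>X. mclose absF e N M \<longrightarrow> f N = f M) \<and>
       (\<exists>K. K \<subseteq> X \<and> seq_compact_in absF K \<and> {M. f M \<noteq> 0} \<subseteq> K)}"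

text \<open>S*(X): algebraic dual (complex-linear functionals on S(X)), normalized to be 0
off S(X).\<close>
definition SdualX :: "('a::field \<Rightarrow> real) \<Rightarrow> 'a mat2 set \<Rightarrow> (('a mat2 \<Rightarrow> complex) \<Rightarrow> complex) set" where
  "SdualX absF X = {\<xi>. (\<forall>f. f \<notin> SX absF X \<longrightarrow> \<xi> f = 0) \<and>
       (\<forall>f\<in>SX absF X. \<forall>h\<in>SX absF X. \<forall>c a. \<xi> (\<lambda>M. c * f M + a * h M) = c * \<xi> f + a * \<xi> h)}"

text \<open>Action of g in the first factor G on S*(X) tensor (|det| boxtimes |det|^{-1}):
(g xi)(f) = |det g| * xi((g,1)^{-1} f), where ((g,1)^{-1} f)(M) = f(g M).\<close>
definition act1 :: "('a::field \<Rightarrow> real) \<Rightarrow> 'a mat2 set \<Rightarrow> 'a mat2 \<Rightarrow>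
    (('a mat2 \<Rightarrow> complex) \<Rightarrow> complex) \<Rightarrow> (('a mat2 \<Rightarrow> complex) \<Rightarrow> complex)" where
  "act1 absF X g \<xi> = (\<lambda>f. if f \<in> SX absF X
       then complex_of_real (absF (det g)) * \<xi> (\<lambda>M. f (g ** M)) else 0)"

definition Sinv :: "('a::field \<Rightarrow> real) \<Rightarrow> 'a mat2 set \<Rightarrow> (('a mat2 \<Rightarrow> complex) \<Rightarrow> complex) set" where
  "Sinv absF X = {\<xi>\<in>SdualX absF X. \<forall>g\<in>GL2. act1 absF X g \<xi> = \<xi>}"

fun iter_diff :: "('a::field \<Rightarrow> real) \<Rightarrow> 'a mat2 set \<Rightarrow> 'a mat2 list \<Rightarrow>
    (('a mat2 \<Rightarrow> complex) \<Rightarrow> complex) \<Rightarrow> (('a mat2 \<Rightarrow> complex) \<Rightarrow> complex)" where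
  "iter_diff absF X [] \<xi> = \<xi>"
| "iter_diff absF X (g # gs) \<xi> =
     (\<lambda>f. act1 absF X g (iter_diff absF X gs \<xi>) f - iter_diff absF X gs \<xi> f)"

definition Sgeninv :: "('a::field \<Rightarrow> real) \<Rightarrow> 'a mat2 set \<Rightarrow> (('a mat2 \<Rightarrow> complex) \<Rightarrow> complex) set" where
  "Sgeninv absF X = {\<xi>\<in>SdualX absF X. \<exists>k::nat. \<forall>gs. length gs = Suc k \<and> set gs \<subseteq> GL2 \<longrightarrow>
       iter_diff absF X gs \<xi> = (\<lambda>f. 0)}"

text \<open>Restriction of distributions from O1bar to its open subset O1 (dual of extension
by zero S(O1) \<rightarrow> S(O1bar)).\<close>
definition restr1 :: "('a::field \<Rightarrow> real) \<Rightarrow> (('a mat2 \<Rightarrow> complex) \<Rightarrow> complex) \<Rightarrow>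
    (('a mat2 \<Rightarrow> complex) \<Rightarrow> complex)" where
  "restr1 absF \<xi> = (\<lambda>f. if f \<in> SX absF O1 then \<xi> f else 0)"

end

theory Submission
  imports Defs "HOL-Library.Infinite_Set"
begin


locale NLA =
  fixes absF :: "'a::field \<Rightarrow> real"
  assumes nlf: "nonarch_local_field absF"
begin

lemma na: "nonarch_abs absF" using nlf unfolding nonarch_local_field_def by blast
lemma a0[simp]: "absF 0 = 0" using na unfolding nonarch_abs_def by blast
lemma apos: "x \<noteq> 0 \<Longrightarrow> absF x > 0" using na unfolding nonarch_abs_def by blast
lemma amult: "absF (x * y) = absF x * absF y" using na unfolding nonarch_abs_def by blast
lemma aultra: "absF (x + y) \<le> max (absF x) (absF y)" using na unfolding nonarch_abs_def by blast
lemma anontriv: "\<exists>x. absF x \<noteq> 0 \<and> absF x \<noteq> 1" using na unfolding nonarch_abs_def by blast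
lemma anonneg[simp]: "absF x \<ge> 0" by (cases "x = 0") (auto dest: apos)
lemma aeq0[simp]: "absF x = 0 \<longleftrightarrow> x = 0" using apos by fastforce
lemma a1[simp]: "absF 1 = 1"
proof -
  have "absF 1 = absF 1 * absF 1" using amult[of 1 1] by simp
  moreover have "absF 1 > 0" using apos by simp
  ultimately show ?thesis by (metis mult_cancel_left1 less_irrefl)
qed
lemma aneg1: "absF (-1) = 1"
proof -
  have "absF (-1) * absF (-1) = 1" using amult[of "-1" "-1"] by simp
  then show ?thesis using anonneg[of "-1"]
    by (metis abs_of_nonneg real_sqrt_abs2 real_sqrt_one power2_eq_square)
qed
lemma aneg[simp]: "absF (- x) = absF x"
  using amult[of "-1" x] aneg1 by simp
lemma asub_comm: "absF (x - y) = absF (y - x)"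
  by (metis aneg minus_diff_eq)
lemma atri: "absF (x + y) \<le> absF x + absF y"
  using aultra[of x y] anonneg[of x] anonneg[of y] by linarith
lemma atri_sub: "absF (x - z) \<le> absF (x - y) + absF (y - z)"
  using atri[of "x - y" "y - z"] by simp
lemma asum: "absF (sum f S) \<le> (\<Sum>i\<in>S. absF (f i))"
proof (cases "finite S")
  case True then show ?thesis
  proof (induction S rule: finite_induct)
    case (insert x F)
    then show ?case using atri[of "f x" "sum f F"] by simp
  qed simp
qed simp

definition conv :: "(nat \<Rightarrow> 'a mat2) \<Rightarrow> 'a mat2 \<Rightarrow> bool" where
  "conv s L \<longleftrightarrow> (\<forall>i j. (\<lambda>n. absF (s n $ i $ j - L $ i $ j)) \<longlonglongrightarrow> 0)"

lemma null_cmp: assumes "\<And>n. 0 \<le> f n" "\<And>n. f n \<le> g n" "g \<longlonglongrightarrow> 0"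
  shows "f \<longlonglongrightarrow> (0::real)"
  by (rule Lim_null_comparison[OF _ assms(3)]) (use assms in auto)

lemma mult_diff_bound:
  "absF ((g ** N) $ i $ j - (g ** L) $ i $ j) \<le> (\<Sum>k\<in>UNIV. absF (g $ i $ k) * absF (N $ k $ j - L $ k $ j))"
proof -
  have "(g ** N) $ i $ j - (g ** L) $ i $ j = (\<Sum>k\<in>UNIV. g $ i $ k * (N $ k $ j - L $ k $ j))"
    by (simp add: matrix_matrix_mult_def sum_subtractf right_diff_distrib)
  then show ?thesis using asum[of "\<lambda>k. g $ i $ k * (N $ k $ j - L $ k $ j)" UNIV] by (simp add: amult)
qed

lemma conv_mult: assumes "conv s L" shows "conv (\<lambda>n. g ** s n) (g ** L)"
  unfolding conv_def
proof (intro allI)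
  fix i j
  have "(\<lambda>n. \<Sum>k\<in>UNIV. absF (g $ i $ k) * absF (s n $ k $ j - L $ k $ j)) \<longlonglongrightarrow> 0"
    apply (rule tendsto_null_sum)
    using assms unfolding conv_def by (auto intro: tendsto_mult_right_zero)
  then show "(\<lambda>n. absF ((g ** s n) $ i $ j - (g ** L) $ i $ j)) \<longlonglongrightarrow> 0"
    by (rule null_cmp[OF anonneg mult_diff_bound])
qed

lemma conv_subseq: "conv s L \<Longrightarrow> strict_mono r \<Longrightarrow> conv (s \<circ> r) L"
  unfolding conv_def using LIMSEQ_subseq_LIMSEQ by (fastforce simp: o_def)

lemma lim_prod:
  assumes "(\<lambda>n. absF (a n - a0)) \<longlonglongrightarrow> 0" "(\<lambda>n. absF (b n - b0)) \<longlonglongrightarrow> 0"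
  shows "(\<lambda>n. absF (a n * b n - a0 * b0)) \<longlonglongrightarrow> 0"
proof -
  have eq: "a n * b n - a0 * b0 = (a n - a0) * (b n - b0) + (a0 * (b n - b0) + (a n - a0) * b0)" for n
    by (simp add: algebra_simps)
  have le: "absF (a n * b n - a0 * b0) \<le> absF (a n - a0) * absF (b n - b0) + (absF a0 * absF (b n - b0) + absF (a n - a0) * absF b0)" for n
  proof -
    have h1: "absF ((a n - a0) * (b n - b0) + (a0 * (b n - b0) + (a n - a0) * b0)) \<le> absF ((a n - a0) * (b n - b0)) + absF (a0 * (b n - b0) + (a n - a0) * b0)"
      by (rule atri)
    have h2: "absF (a0 * (b n - b0) + (a n - a0) * b0) \<le> absF (a0 * (b n - b0)) + absF ((a n - a0) * b0)"
      by (rule atri)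
    show ?thesis unfolding eq using h1 h2 unfolding amult by linarith
  qed
  have "(\<lambda>n. absF (a n - a0) * absF (b n - b0) + (absF a0 * absF (b n - b0) + absF (a n - a0) * absF b0)) \<longlonglongrightarrow> 0"
    using assms by (auto intro!: tendsto_add_zero tendsto_mult_zero tendsto_mult_right_zero tendsto_mult_left_zero)
  then show ?thesis by (rule null_cmp[OF anonneg le])
qed

lemma lim_diff:
  assumes "(\<lambda>n. absF (a n - a0)) \<longlonglongrightarrow> 0" "(\<lambda>n. absF (b n - b0)) \<longlonglongrightarrow> 0"
  shows "(\<lambda>n. absF ((a n - b n) - (a0 - b0))) \<longlonglongrightarrow> 0"
proof -
  have le: "absF ((a n - b n) - (a0 - b0)) \<le> absF (a n - a0) + absF (b n - b0)" for n
  proof -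
    have e: "(a n - b n) - (a0 - b0) = (a n - a0) + (b0 - b n)" by (simp add: algebra_simps)
    show ?thesis unfolding e using atri[of "a n - a0" "b0 - b n"] asub_comm[of "b n" b0] by linarith
  qed
  show ?thesis by (rule null_cmp[OF anonneg le]) (use assms in \<open>auto intro: tendsto_add_zero\<close>)
qed

lemma lim_const_zero: assumes "(\<lambda>n. absF (a n - a0)) \<longlonglongrightarrow> 0" "\<And>n. a n = 0" shows "a0 = 0"
  using assms(1) by (simp add: asub_comm[of 0] assms(2) LIMSEQ_const_iff)

end


lemma enum_ok: assumes "infinite S" shows "strict_mono (enumerate S) \<and> (\<forall>n. enumerate S n \<in> S)"
  using assms by (simp add: strict_mono_def enumerate_mono enumerate_in_set)

lemma pigeon:
  assumes "\<And>n::nat. P n \<or> Q n"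
  shows "\<exists>r::nat\<Rightarrow>nat. strict_mono r \<and> ((\<forall>n. P (r n)) \<or> (\<forall>n. Q (r n)))"
proof (cases "infinite {n. P n}")
  case True
  have a: "strict_mono (enumerate {n. P n})" and b: "\<forall>n. P (enumerate {n. P n} n)" using enum_ok[OF True] by auto
  show ?thesis apply (rule exI[of _ "enumerate {n. P n}"]) using a b by simp
next
  case False
  then obtain m where m: "\<forall>n\<in>{n. P n}. n \<le> m" using finite_nat_set_iff_bounded_le by blast
  have "{Suc m..} \<subseteq> {n. Q n}"
  proof
    fix n assume "n \<in> {Suc m..}"
    then have "\<not> P n" using m by fastforce
    then show "n \<in> {n. Q n}" using assms[of n] by simp
  qed
  then have "infinite {n. Q n}" using infinite_Ici[of "Suc m"] infinite_super by blast
  then show ?thesis using enum_ok[of "{n. Q n}"] by (metis mem_Collect_eq)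
qed

context NLA begin

definition seqclosed :: "'a mat2 set \<Rightarrow> bool" where
  "seqclosed C \<longleftrightarrow> (\<forall>s L. (\<forall>n. s n \<in> C) \<longrightarrow> conv s L \<longrightarrow> L \<in> C)"

lemma sc_iff: "seq_compact_in absF K \<longleftrightarrow> (\<forall>s::nat \<Rightarrow> 'a mat2. (\<forall>n. s n \<in> K) \<longrightarrow> (\<exists>(r::nat\<Rightarrow>nat) L. strict_mono r \<and> L \<in> K \<and> conv (s \<circ> r) L))"
  by (simp add: seq_compact_in_def conv_def o_def)

lemma sc_union: assumes "seq_compact_in absF K1" "seq_compact_in absF K2"
  shows "seq_compact_in absF (K1 \<union> K2)"
  unfolding sc_iff
proof (intro allI impI)
  fix s :: "nat \<Rightarrow> 'a mat2" assume s: "\<forall>n. s n \<in> K1 \<union> K2"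
  have H: "\<exists>r::nat\<Rightarrow>nat. strict_mono r \<and> ((\<forall>n. s (r n) \<in> K1) \<or> (\<forall>n. s (r n) \<in> K2))"
    by (rule pigeon) (use s in auto)
  then obtain r :: "nat \<Rightarrow> nat" where r: "strict_mono r" "(\<forall>n. s (r n) \<in> K1) \<or> (\<forall>n. s (r n) \<in> K2)"
    by blast
  from r(2) show "\<exists>r L. strict_mono r \<and> L \<in> K1 \<union> K2 \<and> conv (s \<circ> r) L"
  proof
    assume "\<forall>n. s (r n) \<in> K1"
    then have "\<forall>n. (s \<circ> r) n \<in> K1" by simp
    then obtain r' L where "strict_mono r'" "L \<in> K1" "conv ((s \<circ> r) \<circ> r') L"
      using assms(1)[unfolded sc_iff, rule_format, of "s \<circ> r"] by blast
    then show ?thesis using r(1) by (intro exI[of _ "r \<circ> r'"] exI[of _ L]) (auto simp: strict_mono_o o_assoc)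
  next
    assume "\<forall>n. s (r n) \<in> K2"
    then have "\<forall>n. (s \<circ> r) n \<in> K2" by simp
    then obtain r' L where "strict_mono r'" "L \<in> K2" "conv ((s \<circ> r) \<circ> r') L"
      using assms(2)[unfolded sc_iff, rule_format, of "s \<circ> r"] by blast
    then show ?thesis using r(1) by (intro exI[of _ "r \<circ> r'"] exI[of _ L]) (auto simp: strict_mono_o o_assoc)
  qed
qed

lemma sc_inter: assumes "seq_compact_in absF K" "seqclosed C"
  shows "seq_compact_in absF (K \<inter> C)"
  unfolding sc_iff
proof (intro allI impI)
  fix s :: "nat \<Rightarrow> 'a mat2" assume s: "\<forall>n. s n \<in> K \<inter> C"
  then obtain r L where r: "strict_mono r" "L \<in> K" "conv (s \<circ> r) L"
    using assms(1)[unfolded sc_iff, rule_format, of s] by blast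
  have "L \<in> C" using assms(2)[unfolded seqclosed_def, rule_format, of "s \<circ> r" L] s r(3) by simp
  then show "\<exists>r L. strict_mono r \<and> L \<in> K \<inter> C \<and> conv (s \<circ> r) L" using r by blast
qed

lemma lim_le:
  assumes "(\<lambda>n. absF (a n - a0)) \<longlonglongrightarrow> 0" "\<And>n. absF (a n) \<ge> e"
  shows "absF a0 \<ge> e"
proof -
  have "absF (a n) \<le> absF (a n - a0) + absF a0" for n using atri[of "a n - a0" a0] by simp
  then have "e \<le> absF (a n - a0) + absF a0" for n using assms(2) order_trans by blast
  moreover have "(\<lambda>n. absF (a n - a0) + absF a0) \<longlonglongrightarrow> 0 + absF a0"
    using assms(1) by (intro tendsto_add) auto
  ultimately show ?thesis by (intro tendsto_le[OF trivial_limit_sequentially _ tendsto_const]) auto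
qed

lemma lim_le2:
  assumes "(\<lambda>n. absF (a n - a0)) \<longlonglongrightarrow> 0" "\<And>n. absF (a n) \<le> e"
  shows "absF a0 \<le> e"
proof -
  have "absF a0 \<le> absF (a n - a0) + absF (a n)" for n using atri[of "a0 - a n" "a n"] asub_comm[of a0] by simp
  then have "absF a0 \<le> absF (a n - a0) + e" for n using assms(2) by (smt (verit))
  moreover have "(\<lambda>n. absF (a n - a0) + e) \<longlonglongrightarrow> 0 + e"
    using assms(1) by (intro tendsto_add) auto
  ultimately show ?thesis by (intro tendsto_le[OF trivial_limit_sequentially _ tendsto_const]) auto
qed

lemma seqclosed_far: "seqclosed {M. \<not> mclose absF e M 0}"
  unfolding seqclosed_def
proof (intro allI impI)
  fix s :: "nat \<Rightarrow> 'a mat2" and L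
  assume s0: "\<forall>n. s n \<in> {M. \<not> mclose absF e M 0}" and c: "conv s L"
  have s: "\<forall>n. \<exists>i j. e \<le> absF (s n $ i $ j)" using s0 unfolding mclose_def by (auto simp: not_less)
  show "L \<in> {M. \<not> mclose absF e M 0}"
  proof (rule ccontr)
    assume "L \<notin> {M. \<not> mclose absF e M 0}"
    then have nf: "\<forall>i j. absF (L $ i $ j) < e" unfolding mclose_def by simp
    have "\<forall>i j. \<forall>\<^sub>F n in sequentially. absF (s n $ i $ j) < e"
    proof (intro allI)
      fix i j
      have "absF (L $ i $ j) < e" using nf by simp
      then have "\<forall>\<^sub>F n in sequentially. absF (s n $ i $ j - L $ i $ j) < e - absF (L $ i $ j)"
        using c unfolding conv_def by (intro order_tendstoD(2)) auto
      then show "\<forall>\<^sub>F n in sequentially. absF (s n $ i $ j) < e"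
      proof (rule eventually_mono)
        fix n assume "absF (s n $ i $ j - L $ i $ j) < e - absF (L $ i $ j)"
        moreover have "absF (s n $ i $ j) \<le> absF (s n $ i $ j - L $ i $ j) + absF (L $ i $ j)"
          using atri[of "s n $ i $ j - L $ i $ j" "L $ i $ j"] by simp
        ultimately show "absF (s n $ i $ j) < e" by linarith
      qed
    qed
    then have "\<forall>\<^sub>F n in sequentially. \<forall>i j. absF (s n $ i $ j) < e"
      by (simp add: eventually_all_finite)
    then obtain N where "\<forall>n\<ge>N. \<forall>i j. absF (s n $ i $ j) < e" unfolding eventually_sequentially by blast
    then have "\<forall>i j. absF (s N $ i $ j) < e" by blast
    then show False using s[rule_format, of N] by (auto simp: not_le[symmetric])
  qed
qed

lemma seqclosed_O1bar: "seqclosed O1bar"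
  unfolding seqclosed_def
proof (intro allI impI)
  fix s :: "nat \<Rightarrow> 'a mat2" and L assume s0: "\<forall>n. s n \<in> O1bar" and c: "conv s L"
  have s: "\<And>n. s n $ 1 $ 1 * s n $ 2 $ 2 - s n $ 1 $ 2 * s n $ 2 $ 1 = 0"
    using s0 unfolding O1bar_def det_2[symmetric] by simp
  have cc: "\<And>i j. (\<lambda>n. absF (s n $ i $ j - L $ i $ j)) \<longlonglongrightarrow> 0" using c conv_def by blast
  have "(\<lambda>n. absF ((s n $ 1 $ 1 * s n $ 2 $ 2 - s n $ 1 $ 2 * s n $ 2 $ 1) - (L $ 1 $ 1 * L $ 2 $ 2 - L $ 1 $ 2 * L $ 2 $ 1))) \<longlonglongrightarrow> 0"
    by (rule lim_diff[OF lim_prod[OF cc cc] lim_prod[OF cc cc]])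
  from lim_const_zero[OF this s] have "det L = 0" unfolding det_2 .
  then show "L \<in> O1bar" unfolding O1bar_def by simp
qed

lemma box_subseq:
  fixes s :: "nat \<Rightarrow> 'i \<Rightarrow> 'a"
  assumes "finite I" "\<And>n i. i \<in> I \<Longrightarrow> absF (s n i) \<le> 1"
  shows "\<exists>(r::nat\<Rightarrow>nat) l. strict_mono r \<and> (\<forall>i\<in>I. absF (l i) \<le> 1 \<and> (\<lambda>n. absF (s (r n) i - l i)) \<longlonglongrightarrow> 0)"
  using assms
proof (induction I rule: finite_induct)
  case empty
  then show ?case by (intro exI[of _ id]) (auto simp: strict_mono_def)
next
  case (insert x F)
  have "\<And>n i. i \<in> F \<Longrightarrow> absF (s n i) \<le> 1" using insert(4) by simp
  from insert(3)[OF this] obtain r :: "nat \<Rightarrow> nat" and l where r: "strict_mono r" "\<forall>i\<in>F. absF (l i) \<le> 1 \<and> (\<lambda>n. absF (s (r n) i - l i)) \<longlonglongrightarrow> 0"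
    by blast
  obtain r2 :: "nat \<Rightarrow> nat" and lx where r2: "strict_mono r2" "absF lx \<le> 1" "(\<lambda>n. absF (s (r (r2 n)) x - lx)) \<longlonglongrightarrow> 0"
  proof -
    have "\<forall>n. absF (s (r n) x) \<le> 1" using insert(4)[of x] by simp
    from nlf[unfolded nonarch_local_field_def, THEN conjunct2, THEN spec[of _ "\<lambda>n. s (r n) x"], THEN mp, OF this]
    show ?thesis by (elim exE conjE) (rule that)
  qed
  show ?case
  proof (intro exI[of _ "r \<circ> r2"] exI[of _ "l(x := lx)"] conjI ballI)
    show "strict_mono (r \<circ> r2)" using r r2 strict_mono_o by blast
    fix i assume i: "i \<in> insert x F"
    show "absF ((l(x := lx)) i) \<le> 1" using i r(2) r2(2) by (cases "i = x") auto
    show "(\<lambda>n. absF (s ((r \<circ> r2) n) i - (l(x := lx)) i)) \<longlonglongrightarrow> 0"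
    proof (cases "i = x")
      case True then show ?thesis using r2 by simp
    next
      case False then have "i \<in> F" using i by simp
      then have "(\<lambda>n. absF (s (r n) i - l i)) \<longlonglongrightarrow> 0" using r by blast
      from LIMSEQ_subseq_LIMSEQ[OF this r2(1)] show ?thesis using False by (simp add: o_def)
    qed
  qed
qed

definition Box :: "'a mat2 set" where "Box = {M. \<forall>i j. absF (M $ i $ j) \<le> 1}"

lemma sc_box: "seq_compact_in absF Box"
  unfolding seq_compact_in_def
proof (intro allI impI)
  fix s :: "nat \<Rightarrow> 'a mat2" assume s: "\<forall>n. s n \<in> Box"
  obtain r :: "nat \<Rightarrow> nat" and l where r: "strict_mono r" "\<forall>p\<in>(UNIV::(2\<times>2) set). absF (l p) \<le> 1 \<and> (\<lambda>n. absF ((\<lambda>n (i,j). s n $ i $ j) (r n) p - l p)) \<longlonglongrightarrow> 0"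
    using box_subseq[of UNIV "\<lambda>n (i,j). s n $ i $ j"] s unfolding Box_def by auto
  show "\<exists>r L. strict_mono r \<and> L \<in> Box \<and> (\<forall>i j. (\<lambda>n. absF (s (r n) $ i $ j - L $ i $ j)) \<longlonglongrightarrow> 0)"
  proof (intro exI[of _ r] exI[of _ "\<chi> i j. l (i,j)"] conjI allI)
    show "strict_mono r" by fact
    show "(\<chi> i j. l (i, j)) \<in> Box" using r unfolding Box_def by auto
    fix i j show "(\<lambda>n. absF (s (r n) $ i $ j - (\<chi> i j. l (i, j)) $ i $ j)) \<longlonglongrightarrow> 0"
      using r(2)[rule_format, of "(i,j)"] by simp
  qed
qed

lemma far_from_zero:
  assumes "seq_compact_in absF K" "0 \<notin> K"
  shows "\<exists>e>0. \<forall>M\<in>K. \<not> mclose absF e M 0"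
proof (rule ccontr)
  assume "\<not> ?thesis"
  then have "\<forall>n. \<exists>M\<in>K. mclose absF (inverse (real (Suc n))) M 0" by auto
  then have "\<forall>n. \<exists>M. M \<in> K \<and> mclose absF (inverse (real (Suc n))) M 0" by blast
  then obtain s where s: "\<And>n. s n \<in> K" "\<And>n. mclose absF (inverse (real (Suc n))) (s n) 0"
    using choice[of "\<lambda>n M. M \<in> K \<and> mclose absF (inverse (real (Suc n))) M 0"] by blast
  then obtain r L where r: "strict_mono r" "L \<in> K" "conv (s \<circ> r) L"
    using assms(1)[unfolded sc_iff, rule_format, of s] by blast
  have "L $ i $ j = 0" for i j
  proof -
    have b: "absF (s (r n) $ i $ j) \<le> inverse (real (Suc n))" for n
    proof -
      have "absF (s (r n) $ i $ j) < inverse (real (Suc (r n)))" using s(2)[of "r n"] unfolding mclose_def by simp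
      moreover have "inverse (real (Suc (r n))) \<le> inverse (real (Suc n))"
        using seq_suble[OF r(1), of n] by (simp add: le_imp_inverse_le)
      ultimately show ?thesis by linarith
    qed
    have t: "(\<lambda>n. absF (s (r n) $ i $ j)) \<longlonglongrightarrow> 0"
      by (rule null_cmp[OF anonneg b LIMSEQ_inverse_real_of_nat])
    have "(\<lambda>n. absF (s (r n) $ i $ j - L $ i $ j)) \<longlonglongrightarrow> 0" using r(3) unfolding conv_def by auto
    have "absF (L $ i $ j) \<le> absF (L $ i $ j - s (r n) $ i $ j) + absF (s (r n) $ i $ j)" for n
      using atri[of "L $ i $ j - s (r n) $ i $ j" "s (r n) $ i $ j"] by simp
    then have le: "absF (L $ i $ j) \<le> absF (s (r n) $ i $ j - L $ i $ j) + absF (s (r n) $ i $ j)" for n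
      by (simp add: asub_comm)
    have "(\<lambda>n. absF (s (r n) $ i $ j - L $ i $ j) + absF (s (r n) $ i $ j)) \<longlonglongrightarrow> 0 + 0"
      by (intro tendsto_add) fact+
    then have "absF (L $ i $ j) \<le> 0" using le by (intro tendsto_le[OF trivial_limit_sequentially _ tendsto_const]) auto
    then show ?thesis using anonneg[of "L $ i $ j"] by simp
  qed
  then have "L = 0" by (simp add: vec_eq_iff)
  then show False using r(2) assms(2) by simp
qed

end


lemma inv_exists: assumes "g \<in> GL2" shows "\<exists>B::'a::field mat2. B ** g = mat 1 \<and> g ** B = mat 1"
  using assms unfolding GL2_def invertible_det_nz[symmetric] invertible_def by blast

lemma mat_mul_zero[simp]: "(g::'a::field mat2) ** 0 = 0"
  by (simp add: vec_eq_iff matrix_matrix_mult_def)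

definition ginv :: "'a::field mat2 set \<Rightarrow> bool" where
  "ginv X \<longleftrightarrow> (\<forall>g\<in>GL2. \<forall>M. g ** M \<in> X \<longleftrightarrow> M \<in> X)"

lemma ginv_O1bar: "ginv O1bar"
  unfolding ginv_def O1bar_def GL2_def by (simp add: det_mul)

lemma ginv_O1: "ginv O1"
  unfolding ginv_def
proof (intro ballI allI)
  fix g :: "'a mat2" and M :: "'a mat2" assume g: "g \<in> GL2"
  then obtain B where B: "B ** g = mat 1" using inv_exists by blast
  have "g ** M = 0 \<longleftrightarrow> M = 0"
  proof
    assume "g ** M = 0"
    then have "B ** (g ** M) = 0" by simp
    then show "M = 0" by (simp add: matrix_mul_assoc B)
  qed simp
  then show "(g ** M \<in> O1) = (M \<in> O1)"
    using g unfolding GL2_def O1_def by (simp add: det_mul)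
qed

lemma O1_sub: "O1 \<subseteq> O1bar" unfolding O1_def O1bar_def by auto

lemma zero_O1bar: "0 \<in> O1bar" unfolding O1bar_def by (simp add: det_2)
lemma zero_notin_O1: "0 \<notin> O1" unfolding O1_def by simp

context NLA begin

lemma mclose_mono: "mclose absF e N M \<Longrightarrow> e \<le> e' \<Longrightarrow> mclose absF e' N M"
  unfolding mclose_def by (meson less_le_trans)

lemma mclose_min1: "mclose absF (min a b) N M \<Longrightarrow> mclose absF a N M"
  using mclose_mono min.cobounded1 by blast
lemma mclose_min2: "mclose absF (min a b) N M \<Longrightarrow> mclose absF b N M"
  using mclose_mono min.cobounded2 by blast

lemma mclose_refl: "e > 0 \<Longrightarrow> mclose absF e M M"
  unfolding mclose_def by simp

lemma SX_lin:
  assumes f: "f \<in> SX absF X" and h: "h \<in> SX absF X"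
  shows "(\<lambda>M. c * f M + a * h M) \<in> SX absF X"
proof -
  obtain K1 where K1: "K1 \<subseteq> X" "seq_compact_in absF K1" "{M. f M \<noteq> 0} \<subseteq> K1" using f unfolding SX_def by blast
  obtain K2 where K2: "K2 \<subseteq> X" "seq_compact_in absF K2" "{M. h M \<noteq> 0} \<subseteq> K2" using h unfolding SX_def by blast
  have lc: "\<exists>e>0. \<forall>N\<in>X. mclose absF e N M \<longrightarrow> c * f N + a * h N = c * f M + a * h M" if M: "M \<in> X" for M
  proof -
    obtain e1 where e1: "e1 > 0" "\<forall>N\<in>X. mclose absF e1 N M \<longrightarrow> f N = f M" using f M unfolding SX_def by blast
    obtain e2 where e2: "e2 > 0" "\<forall>N\<in>X. mclose absF e2 N M \<longrightarrow> h N = h M" using h M unfolding SX_def by blast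
    show ?thesis
    proof (intro exI[of _ "min e1 e2"] conjI ballI impI)
      show "0 < min e1 e2" using e1 e2 by simp
      fix N :: "'a mat2" assume "N \<in> X" "mclose absF (min e1 e2) N M"
      then show "c * f N + a * h N = c * f M + a * h M" using e1 e2 mclose_min1 mclose_min2 by metis
    qed
  qed
  have "{M. c * f M + a * h M \<noteq> 0} \<subseteq> {M. f M \<noteq> 0} \<union> {M. h M \<noteq> 0}" by auto
  then have "K1 \<union> K2 \<subseteq> X" "seq_compact_in absF (K1 \<union> K2)" "{M. c * f M + a * h M \<noteq> 0} \<subseteq> K1 \<union> K2"
    using K1 K2 sc_union by auto
  then show ?thesis using f h lc unfolding SX_def by blast
qed

lemma mult_close:
  assumes "e > 0"
  shows "\<exists>d>0. \<forall>N M. mclose absF d N M \<longrightarrow> mclose absF e (g ** N) (g ** M)"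
proof -
  define C where "C = 1 + (\<Sum>i\<in>UNIV. \<Sum>k\<in>UNIV. absF (g $ i $ k))"
  have C0: "C - 1 \<ge> 0" unfolding C_def by (simp add: sum_nonneg)
  define d where "d = e / C"
  have d0: "d > 0" unfolding d_def using assms C0 by simp
  have dC: "d * C = e" unfolding d_def using C0 by simp
  show ?thesis
  proof (intro exI[of _ d] conjI allI impI d0)
    fix N M assume cl: "mclose absF d N M"
    show "mclose absF e (g ** N) (g ** M)" unfolding mclose_def
    proof (intro allI)
      fix i j
      have "absF ((g ** N) $ i $ j - (g ** M) $ i $ j) \<le> (\<Sum>k\<in>UNIV. absF (g $ i $ k) * absF (N $ k $ j - M $ k $ j))"
        by (rule mult_diff_bound)
      also have "\<dots> \<le> (\<Sum>k\<in>UNIV. absF (g $ i $ k) * d)"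
        using cl unfolding mclose_def by (intro sum_mono mult_left_mono) (auto intro: less_imp_le)
      also have "\<dots> = d * (\<Sum>k\<in>UNIV. absF (g $ i $ k))" by (subst sum_distrib_left) (simp add: mult.commute)
      also have "\<dots> \<le> d * (C - 1)"
      proof -
        have "(\<Sum>k\<in>UNIV. absF (g $ i $ k)) \<le> (\<Sum>i\<in>UNIV. \<Sum>k\<in>UNIV. absF (g $ i $ k))"
          by (rule member_le_sum[of i UNIV "\<lambda>i. \<Sum>k\<in>UNIV. absF (g $ i $ k)"]) (auto simp: sum_nonneg)
        then show ?thesis using d0 unfolding C_def by simp
      qed
      also have "\<dots> < e" using dC d0 by (simp add: algebra_simps)
      finally show "absF ((g ** N) $ i $ j - (g ** M) $ i $ j) < e" .
    qed
  qed
qed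

lemma SX_comp:
  assumes f: "f \<in> SX absF X" and X: "ginv X" and g: "g \<in> GL2"
  shows "(\<lambda>M. f (g ** M)) \<in> SX absF X"
proof -
  have inv: "\<And>M. g ** M \<in> X \<longleftrightarrow> M \<in> X" using X g unfolding ginv_def by blast
  obtain B where B: "B ** g = mat 1" "g ** B = mat 1" using inv_exists[OF g] by blast
  obtain K where K: "K \<subseteq> X" "seq_compact_in absF K" "{M. f M \<noteq> 0} \<subseteq> K" using f unfolding SX_def by blast
  define K' where "K' = {M. g ** M \<in> K}"
  have z: "\<forall>M. M \<notin> X \<longrightarrow> f (g ** M) = 0" using f inv unfolding SX_def by blast
  have lc: "\<exists>e>0. \<forall>N\<in>X. mclose absF e N M \<longrightarrow> f (g ** N) = f (g ** M)" if M: "M \<in> X" for M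
  proof -
    obtain e where e: "e > 0" "\<forall>N\<in>X. mclose absF e N (g ** M) \<longrightarrow> f N = f (g ** M)"
      using f M inv unfolding SX_def by blast
    obtain d where d: "d > 0" "\<forall>N M. mclose absF d N M \<longrightarrow> mclose absF e (g ** N) (g ** M)"
      using mult_close[OF e(1)] by blast
    show ?thesis using e d inv by (intro exI[of _ d]) auto
  qed
  have K'X: "K' \<subseteq> X" using K inv unfolding K'_def by auto
  have supp: "{M. f (g ** M) \<noteq> 0} \<subseteq> K'" using K unfolding K'_def by auto
  have sc: "seq_compact_in absF K'"
    unfolding sc_iff
  proof (intro allI impI)
    fix s :: "nat \<Rightarrow> 'a mat2" assume s: "\<forall>n. s n \<in> K'"
    then have "\<forall>n. (\<lambda>n. g ** s n) n \<in> K" unfolding K'_def by simp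
    then obtain r L where r: "strict_mono r" "L \<in> K" "conv ((\<lambda>n. g ** s n) \<circ> r) L"
      using K(2)[unfolded sc_iff, rule_format, of "\<lambda>n. g ** s n"] by blast
    have "conv (\<lambda>n. B ** (((\<lambda>n. g ** s n) \<circ> r) n)) (B ** L)" by (rule conv_mult[OF r(3)])
    moreover have "(\<lambda>n. B ** (((\<lambda>n. g ** s n) \<circ> r) n)) = s \<circ> r"
      by (simp add: o_def matrix_mul_assoc B)
    moreover have "B ** L \<in> K'" unfolding K'_def using r(2) by (simp add: matrix_mul_assoc B)
    ultimately show "\<exists>(r::nat\<Rightarrow>nat) L. strict_mono r \<and> L \<in> K' \<and> conv (s \<circ> r) L" using r(1) by auto
  qed
  show ?thesis unfolding SX_def using z lc K'X supp sc by blast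
qed

lemma SX_O1_sub: "SX absF O1 \<subseteq> SX absF O1bar"
proof
  fix f assume f: "f \<in> SX absF O1"
  obtain K where K: "K \<subseteq> O1" "seq_compact_in absF K" "{M. f M \<noteq> 0} \<subseteq> K" using f unfolding SX_def by blast
  have f0: "f 0 = 0" using f zero_notin_O1 unfolding SX_def by blast
  have z: "\<forall>M. M \<notin> O1bar \<longrightarrow> f M = 0" using f O1_sub unfolding SX_def by blast
  have lc: "\<exists>e>0. \<forall>N\<in>O1bar. mclose absF e N M \<longrightarrow> f N = f M" if M: "M \<in> O1bar" for M
  proof (cases "M = 0")
    case True
    obtain e where e: "e > 0" "\<forall>M\<in>K. \<not> mclose absF e M 0"
      using far_from_zero[OF K(2)] K(1) zero_notin_O1 by blast
    show ?thesis using e K(3) True f0 by (intro exI[of _ e]) auto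
  next
    case False
    then have MO: "M \<in> O1" using M unfolding O1_def O1bar_def by simp
    obtain e1 where e1: "e1 > 0" "\<forall>N\<in>O1. mclose absF e1 N M \<longrightarrow> f N = f M" using f MO unfolding SX_def by blast
    obtain i j where ij: "M $ i $ j \<noteq> 0" using False by (metis vec_eq_iff zero_index)
    define d where "d = absF (M $ i $ j)"
    have d0: "d > 0" unfolding d_def using ij apos by blast
    have "f N = f M" if N: "N \<in> O1bar" "mclose absF (min e1 d) N M" for N
    proof -
      have "N \<noteq> 0"
      proof
        assume "N = 0"
        then have "absF (0 - M $ i $ j) < d" using N(2) unfolding mclose_def by (metis min.strict_boundedE zero_index)
        then show False unfolding d_def by simp
      qed
      then have "N \<in> O1" using N(1) unfolding O1_def O1bar_def by simp
      then show ?thesis using e1 N(2) mclose_mono by (meson min.cobounded1)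
    qed
    then show ?thesis using e1(1) d0 by (intro exI[of _ "min e1 d"]) auto
  qed
  show "f \<in> SX absF O1bar" unfolding SX_def using z lc K O1_sub by blast
qed

definition phi :: "'a mat2 \<Rightarrow> complex" where
  "phi M = (if M \<in> O1bar \<inter> Box then 1 else 0)"

lemma ultra_le1: "absF (N - M) < 1 \<Longrightarrow> absF N \<le> 1 \<longleftrightarrow> absF M \<le> 1"
proof -
  assume a: "absF (N - M) < 1"
  have "absF N \<le> max (absF (N - M)) (absF M)" using aultra[of "N - M" M] by simp
  moreover have "absF M \<le> max (absF (M - N)) (absF N)" using aultra[of "M - N" N] by simp
  ultimately show ?thesis using a asub_comm[of M N] by auto
qed

lemma phi_SX: "phi \<in> SX absF O1bar"
proof -
  have lc: "\<forall>N\<in>O1bar. mclose absF 1 N M \<longrightarrow> phi N = phi M" if "M \<in> O1bar" for M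
  proof (intro ballI impI)
    fix N :: "'a mat2" assume N: "N \<in> O1bar" "mclose absF 1 N M"
    have "N \<in> Box \<longleftrightarrow> M \<in> Box" unfolding Box_def using N(2) ultra_le1 unfolding mclose_def by blast
    then show "phi N = phi M" unfolding phi_def using N that by auto
  qed
  have "Box \<inter> O1bar \<subseteq> O1bar" "seq_compact_in absF (Box \<inter> O1bar)" "{M. phi M \<noteq> 0} \<subseteq> Box \<inter> O1bar"
    using sc_inter[OF sc_box seqclosed_O1bar] unfolding phi_def by auto
  note KK = this
  show ?thesis unfolding SX_def
  proof (intro CollectI conjI)
    show "\<forall>M. M \<notin> O1bar \<longrightarrow> phi M = 0" by (simp add: phi_def)
    show "\<forall>M\<in>O1bar. \<exists>e>0. \<forall>N\<in>O1bar. mclose absF e N M \<longrightarrow> phi N = phi M"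
      using lc zero_less_one by blast
    show "\<exists>K\<subseteq>O1bar. seq_compact_in absF K \<and> {M. phi M \<noteq> 0} \<subseteq> K" using KK by blast
  qed
qed

lemma phi0: "phi 0 = 1"
  unfolding phi_def Box_def using zero_O1bar by simp

lemma SX_corr:
  assumes f: "f \<in> SX absF O1bar"
  shows "(\<lambda>M. f M - f 0 * phi M) \<in> SX absF O1"
proof -
  obtain K1 where K1: "K1 \<subseteq> O1bar" "seq_compact_in absF K1" "{M. f M \<noteq> 0} \<subseteq> K1" using f unfolding SX_def by blast
  obtain K2 where K2: "K2 \<subseteq> O1bar" "seq_compact_in absF K2" "{M. phi M \<noteq> 0} \<subseteq> K2" using phi_SX unfolding SX_def by blast
  have zf: "\<And>M. M \<notin> O1bar \<Longrightarrow> f M = 0" using f unfolding SX_def by blast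
  have zp: "\<And>M. M \<notin> O1bar \<Longrightarrow> phi M = 0" unfolding phi_def by simp
  obtain e1 where e1: "e1 > 0" "\<forall>N\<in>O1bar. mclose absF e1 N 0 \<longrightarrow> f N = f 0" using f zero_O1bar unfolding SX_def by blast
  obtain e2 where e2: "e2 > 0" "\<forall>N\<in>O1bar. mclose absF e2 N 0 \<longrightarrow> phi N = phi 0" using phi_SX zero_O1bar unfolding SX_def by blast
  define e0 where "e0 = min e1 e2"
  have e0: "e0 > 0" unfolding e0_def using e1 e2 by simp
  define K where "K = (K1 \<union> K2) \<inter> {M. \<not> mclose absF e0 M 0}"
  have sc: "seq_compact_in absF K" unfolding K_def by (intro sc_inter sc_union K1 K2 seqclosed_far)
  have KO: "K \<subseteq> O1"
  proof
    fix M :: "'a mat2" assume "M \<in> K"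
    then have "M \<in> O1bar" "\<not> mclose absF e0 M 0" unfolding K_def using K1 K2 by auto
    then show "M \<in> O1" using mclose_refl[OF e0, of 0] unfolding O1_def O1bar_def by auto
  qed
  have supp: "{M. f M - f 0 * phi M \<noteq> 0} \<subseteq> K"
  proof
    fix M :: "'a mat2" assume "M \<in> {M. f M - f 0 * phi M \<noteq> 0}"
    then have nz: "f M - f 0 * phi M \<noteq> 0" by simp
    then have MO: "M \<in> O1bar" using zf zp by fastforce
    have "\<not> mclose absF e0 M 0"
    proof
      assume "mclose absF e0 M 0"
      then have "f M = f 0" "phi M = phi 0" using e1 e2 MO mclose_mono unfolding e0_def by (meson min.cobounded1 min.cobounded2)+
      then show False using nz phi0 by simp
    qed
    moreover have "M \<in> K1 \<union> K2" using nz K1(3) K2(3) by (cases "f M = 0") auto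
    ultimately show "M \<in> K" unfolding K_def by simp
  qed
  have z: "\<forall>M. M \<notin> O1 \<longrightarrow> f M - f 0 * phi M = 0"
  proof (intro allI impI)
    fix M :: "'a mat2" assume "M \<notin> O1"
    then have "M = 0 \<or> M \<notin> O1bar" unfolding O1_def O1bar_def by auto
    then show "f M - f 0 * phi M = 0" using zf zp phi0 by auto
  qed
  have lc: "\<exists>e>0. \<forall>N\<in>O1. mclose absF e N M \<longrightarrow> f N - f 0 * phi N = f M - f 0 * phi M" if M: "M \<in> O1" for M
  proof -
    have MO: "M \<in> O1bar" using M O1_sub by blast
    obtain d1 where d1: "d1 > 0" "\<forall>N\<in>O1bar. mclose absF d1 N M \<longrightarrow> f N = f M" using f MO unfolding SX_def by blast
    obtain d2 where d2: "d2 > 0" "\<forall>N\<in>O1bar. mclose absF d2 N M \<longrightarrow> phi N = phi M" using phi_SX MO unfolding SX_def by blast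
    show ?thesis
    proof (intro exI[of _ "min d1 d2"] conjI ballI impI)
      show "0 < min d1 d2" using d1 d2 by simp
      fix N :: "'a mat2" assume N: "N \<in> O1" "mclose absF (min d1 d2) N M"
      then have "N \<in> O1bar" using O1_sub by blast
      then show "f N - f 0 * phi N = f M - f 0 * phi M" using N d1 d2 mclose_min1 mclose_min2 by metis
    qed
  qed
  show ?thesis unfolding SX_def using z lc KO sc supp by blast
qed

end


type_synonym 'a dist = "(('a mat2 \<Rightarrow> complex) \<Rightarrow> complex)"

lemma act1_lin: "act1 absF X g (\<lambda>f. a f + c * b f) = (\<lambda>f. act1 absF X g a f + c * act1 absF X g b f)"
  unfolding act1_def by (auto simp: algebra_simps)

lemma act1_diff: "act1 absF X g (\<lambda>f. a f - b f) = (\<lambda>f. act1 absF X g a f - act1 absF X g b f)"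
  unfolding act1_def by (auto simp: algebra_simps)

lemma act1_zero: "act1 absF X g (\<lambda>f. 0) = (\<lambda>f. 0)"
  unfolding act1_def by auto

lemma iter_diff_zero: "iter_diff absF X gs (\<lambda>f. 0) = (\<lambda>f. 0)"
  by (induction gs) (auto simp: act1_zero)

lemma iter_diff_lin: "iter_diff absF X gs (\<lambda>f. a f + c * b f) = (\<lambda>f. iter_diff absF X gs a f + c * iter_diff absF X gs b f)"
  by (induction gs) (auto simp: act1_lin algebra_simps)

lemma iter_diff_append: "iter_diff absF X (xs @ ys) \<xi> = iter_diff absF X xs (iter_diff absF X ys \<xi>)"
  by (induction xs) auto

lemma iter_diff_Cons: "iter_diff absF X (g # gs) \<xi> = iter_diff absF X [g] (iter_diff absF X gs \<xi>)"
  by simp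

context NLA begin

lemma act1_comp:
  assumes X: "ginv X" and g: "g \<in> GL2" and h: "h \<in> GL2"
  shows "act1 absF X g (act1 absF X h \<xi>) = act1 absF X (g ** h) \<xi>"
proof
  fix f
  show "act1 absF X g (act1 absF X h \<xi>) f = act1 absF X (g ** h) \<xi> f"
  proof (cases "f \<in> SX absF X")
    case True
    have "(\<lambda>M. f (g ** M)) \<in> SX absF X" using SX_comp[OF True X g] .
    moreover have "(\<lambda>M. (\<lambda>M. f (g ** M)) (h ** M)) = (\<lambda>M. f ((g ** h) ** M))"
      by (simp add: matrix_mul_assoc)
    ultimately show ?thesis using True unfolding act1_def by (simp add: det_mul amult)
  next
    case False then show ?thesis unfolding act1_def by simp
  qed
qed

lemma SdualX_lin:
  assumes "a \<in> SdualX absF X" "b \<in> SdualX absF X"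
  shows "(\<lambda>f. a f + c * b f) \<in> SdualX absF X"
  using assms unfolding SdualX_def by (auto simp: algebra_simps)

lemma act1_SdualX:
  assumes \<xi>: "\<xi> \<in> SdualX absF X" and X: "ginv X" and g: "g \<in> GL2"
  shows "act1 absF X g \<xi> \<in> SdualX absF X"
  unfolding SdualX_def
proof (intro CollectI conjI ballI allI impI)
  fix f assume "f \<notin> SX absF X" then show "act1 absF X g \<xi> f = 0" unfolding act1_def by simp
next
  fix f h c a assume f: "f \<in> SX absF X" and h: "h \<in> SX absF X"
  have l: "(\<lambda>M. c * f M + a * h M) \<in> SX absF X" by (rule SX_lin[OF f h])
  have fg: "(\<lambda>M. f (g ** M)) \<in> SX absF X" and hg: "(\<lambda>M. h (g ** M)) \<in> SX absF X"
    using SX_comp[OF f X g] SX_comp[OF h X g] .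
  have "\<xi> (\<lambda>M. c * f (g ** M) + a * h (g ** M)) = c * \<xi> (\<lambda>M. f (g ** M)) + a * \<xi> (\<lambda>M. h (g ** M))"
    using \<xi>[unfolded SdualX_def, THEN CollectD, THEN conjunct2, rule_format, OF fg hg, of c a] by simp
  then show "act1 absF X g \<xi> (\<lambda>M. c * f M + a * h M) = c * act1 absF X g \<xi> f + a * act1 absF X g \<xi> h"
    unfolding act1_def using l f h by (simp add: algebra_simps)
qed

lemma iter_diff_SdualX:
  assumes "\<xi> \<in> SdualX absF X" "ginv X" "set gs \<subseteq> GL2"
  shows "iter_diff absF X gs \<xi> \<in> SdualX absF X"
  using assms(3)
proof (induction gs)
  case Nil then show ?case using assms(1) by simp
next
  case (Cons g gs)
  then have I: "iter_diff absF X gs \<xi> \<in> SdualX absF X" and g: "g \<in> GL2" by auto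
  have A: "act1 absF X g (iter_diff absF X gs \<xi>) \<in> SdualX absF X" by (rule act1_SdualX[OF I assms(2) g])
  have "(\<lambda>f. act1 absF X g (iter_diff absF X gs \<xi>) f + (-1) * iter_diff absF X gs \<xi> f) \<in> SdualX absF X"
    by (rule SdualX_lin[OF A I])
  then show ?case by simp
qed

lemma restr_act:
  assumes g: "g \<in> GL2"
  shows "restr1 absF (act1 absF O1bar g \<xi>) = act1 absF O1 g (restr1 absF \<xi>)"
proof
  fix f
  show "restr1 absF (act1 absF O1bar g \<xi>) f = act1 absF O1 g (restr1 absF \<xi>) f"
  proof (cases "f \<in> SX absF O1")
    case True
    then have "f \<in> SX absF O1bar" using SX_O1_sub by blast
    moreover have "(\<lambda>M. f (g ** M)) \<in> SX absF O1" using SX_comp[OF True ginv_O1 g] .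
    ultimately show ?thesis using True unfolding restr1_def act1_def by simp
  next
    case False then show ?thesis unfolding restr1_def act1_def by simp
  qed
qed

lemma restr_iter:
  assumes "set gs \<subseteq> GL2"
  shows "restr1 absF (iter_diff absF O1bar gs \<xi>) = iter_diff absF O1 gs (restr1 absF \<xi>)"
  using assms
proof (induction gs)
  case Nil then show ?case by simp
next
  case (Cons g gs)
  then have I: "restr1 absF (iter_diff absF O1bar gs \<xi>) = iter_diff absF O1 gs (restr1 absF \<xi>)" and g: "g \<in> GL2" by auto
  have "restr1 absF (iter_diff absF O1bar (g # gs) \<xi>) =
     (\<lambda>f. restr1 absF (act1 absF O1bar g (iter_diff absF O1bar gs \<xi>)) f - restr1 absF (iter_diff absF O1bar gs \<xi>) f)"
    unfolding restr1_def by auto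
  also have "\<dots> = iter_diff absF O1 (g # gs) (restr1 absF \<xi>)"
    unfolding restr_act[OF g] I by simp
  finally show ?case .
qed

lemma restr_SdualX:
  assumes \<xi>: "\<xi> \<in> SdualX absF O1bar" shows "restr1 absF \<xi> \<in> SdualX absF O1"
  unfolding SdualX_def
proof (intro CollectI conjI ballI allI impI)
  fix f assume "f \<notin> SX absF O1" then show "restr1 absF \<xi> f = 0" unfolding restr1_def by simp
next
  fix f h c a assume f: "f \<in> SX absF O1" and h: "h \<in> SX absF O1"
  have l: "(\<lambda>M. c * f M + a * h M) \<in> SX absF O1" by (rule SX_lin[OF f h])
  have f': "f \<in> SX absF O1bar" and h': "h \<in> SX absF O1bar" using f h SX_O1_sub by auto
  have "\<xi> (\<lambda>M. c * f M + a * h M) = c * \<xi> f + a * \<xi> h"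
    using \<xi>[unfolded SdualX_def, THEN CollectD, THEN conjunct2, rule_format, OF f' h', of c a] by simp
  then show "restr1 absF \<xi> (\<lambda>M. c * f M + a * h M) = c * restr1 absF \<xi> f + a * restr1 absF \<xi> h"
    unfolding restr1_def using l f h by simp
qed

definition delta :: "'a dist" where
  "delta = (\<lambda>f. if f \<in> SX absF O1bar then f 0 else 0)"

lemma delta_SdualX: "delta \<in> SdualX absF O1bar"
  unfolding SdualX_def
proof (intro CollectI conjI ballI allI impI)
  fix f assume "f \<notin> SX absF O1bar" then show "delta f = 0" unfolding delta_def by simp
next
  fix f h c a assume f: "f \<in> SX absF O1bar" and h: "h \<in> SX absF O1bar"
  have l: "(\<lambda>M. c * f M + a * h M) \<in> SX absF O1bar" by (rule SX_lin[OF f h])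
  then show "delta (\<lambda>M. c * f M + a * h M) = c * delta f + a * delta h"
    unfolding delta_def using f h by simp
qed

lemma delta_phi: "delta phi = 1"
  unfolding delta_def using phi_SX phi0 by simp

lemma restr_delta: "restr1 absF delta = (\<lambda>f. 0)"
proof
  fix f show "restr1 absF delta f = 0"
  proof (cases "f \<in> SX absF O1")
    case True
    then have "f 0 = 0" using zero_notin_O1 unfolding SX_def by blast
    then show ?thesis unfolding restr1_def delta_def by simp
  qed (simp add: restr1_def)
qed

definition chi :: "'a mat2 list \<Rightarrow> complex" where
  "chi gs = prod_list (map (\<lambda>g. complex_of_real (absF (det g)) - 1) gs)"

lemma iter_delta:
  assumes "set gs \<subseteq> GL2"
  shows "iter_diff absF O1bar gs (\<lambda>f. c * delta f) = (\<lambda>f. (c * chi gs) * delta f)"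
  using assms
proof (induction gs)
  case Nil then show ?case by (simp add: chi_def)
next
  case (Cons g gs)
  then have I: "iter_diff absF O1bar gs (\<lambda>f. c * delta f) = (\<lambda>f. (c * chi gs) * delta f)" and g: "g \<in> GL2" by auto
  have A: "act1 absF O1bar g (\<lambda>f. k * delta f) = (\<lambda>f. (k * complex_of_real (absF (det g))) * delta f)" for k
  proof
    fix f show "act1 absF O1bar g (\<lambda>f. k * delta f) f = (k * complex_of_real (absF (det g))) * delta f"
    proof (cases "f \<in> SX absF O1bar")
      case True
      have "(\<lambda>M. f (g ** M)) \<in> SX absF O1bar" using SX_comp[OF True ginv_O1bar g] .
      then show ?thesis using True unfolding act1_def delta_def by simp
    next
      case False then show ?thesis unfolding act1_def delta_def by simp
    qed
  qed
  show ?case unfolding iter_diff.simps I A by (auto simp: chi_def algebra_simps)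
qed

lemma kernel:
  assumes \<eta>: "\<eta> \<in> SdualX absF O1bar" and v: "\<And>f. f \<in> SX absF O1 \<Longrightarrow> \<eta> f = 0"
  shows "\<eta> = (\<lambda>f. \<eta> phi * delta f)"
proof
  fix f show "\<eta> f = \<eta> phi * delta f"
  proof (cases "f \<in> SX absF O1bar")
    case True
    have c: "(\<lambda>M. f M - f 0 * phi M) \<in> SX absF O1" by (rule SX_corr[OF True])
    then have c': "(\<lambda>M. f M - f 0 * phi M) \<in> SX absF O1bar" using SX_O1_sub by blast
    have e: "(\<lambda>M. 1 * (f M - f 0 * phi M) + f 0 * phi M) = f" by simp
    have "\<eta> (\<lambda>M. 1 * (f M - f 0 * phi M) + f 0 * phi M) = 1 * \<eta> (\<lambda>M. f M - f 0 * phi M) + f 0 * \<eta> phi"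
      using \<eta>[unfolded SdualX_def, THEN CollectD, THEN conjunct2, rule_format, OF c' phi_SX, of 1 "f 0"] by simp
    then have "\<eta> f = 1 * \<eta> (\<lambda>M. f M - f 0 * phi M) + f 0 * \<eta> phi" unfolding e .
    then show ?thesis using v[OF c] True unfolding delta_def by simp
  next
    case False then show ?thesis using \<eta> unfolding SdualX_def delta_def by simp
  qed
qed

end


lemma mif1: "(x::'a::field) * (if P then t else 0) = (if P then x * t else 0)" by simp
lemma mif2: "(if P then t else 0) * (x::'a::field) = (if P then t * x else 0)" by simp
lemma det_mat2: "det (mat t :: 'a::field mat2) = t * t" by (simp add: det_2 mat_def)
lemma mat_comm: "(mat t :: 'a::field mat2) ** g = g ** mat t"
  unfolding vec_eq_iff matrix_matrix_mult_def mat_def by (simp add: mif1 mif2 mult.commute)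

context NLA begin

definition zt :: 'a where "zt = (SOME t. absF t \<noteq> 0 \<and> absF t \<noteq> 1)"
definition zm :: "'a mat2" where "zm = mat zt"

lemma zt: "absF zt \<noteq> 0" "absF zt \<noteq> 1"
  using someI_ex[OF anontriv] unfolding zt_def by auto

lemma zm_GL2: "zm \<in> GL2"
  unfolding GL2_def zm_def using det_mat2[of zt] zt by simp

lemma zm_det: "absF (det zm) \<noteq> 1"
proof
  assume a: "absF (det zm) = 1"
  have "absF (det zm) = absF zt * absF zt" unfolding zm_def using det_mat2[of zt] by (simp add: amult)
  then have "absF zt * absF zt = 1" using a by simp
  then have "absF zt = 1" using anonneg[of zt]
    by (metis abs_of_nonneg real_sqrt_abs2 real_sqrt_one power2_eq_square)
  then show False using zt by simp
qed

lemma chi_rep: "chi (replicate n zm) \<noteq> 0"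
proof -
  have "complex_of_real (absF (det zm)) - 1 \<noteq> 0" using zm_det by (metis eq_iff_diff_eq_0 of_real_eq_1_iff)
  then show ?thesis unfolding chi_def by (simp add: prod_list_zero_iff)
qed

lemma comm1:
  assumes X: "ginv X" and g: "g \<in> GL2"
  shows "iter_diff absF X [zm] (iter_diff absF X [g] \<xi>) = iter_diff absF X [g] (iter_diff absF X [zm] \<xi>)"
proof -
  have c: "act1 absF X zm (act1 absF X g \<xi>) = act1 absF X g (act1 absF X zm \<xi>)"
  proof -
    have "act1 absF X zm (act1 absF X g \<xi>) = act1 absF X (zm ** g) \<xi>" by (rule act1_comp[OF X zm_GL2 g])
    moreover have "zm ** g = g ** zm" unfolding zm_def by (rule mat_comm)
    moreover have "act1 absF X (g ** zm) \<xi> = act1 absF X g (act1 absF X zm \<xi>)" by (rule act1_comp[OF X g zm_GL2, symmetric])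
    ultimately show ?thesis by simp
  qed
  show ?thesis by (simp add: act1_diff c algebra_simps)
qed

lemma commgs:
  assumes X: "ginv X" and gs: "set gs \<subseteq> GL2"
  shows "iter_diff absF X gs (iter_diff absF X [zm] \<xi>) = iter_diff absF X [zm] (iter_diff absF X gs \<xi>)"
  using gs
proof (induction gs arbitrary: \<xi>)
  case Nil then show ?case by simp
next
  case (Cons g gs)
  then have I: "iter_diff absF X gs (iter_diff absF X [zm] \<xi>) = iter_diff absF X [zm] (iter_diff absF X gs \<xi>)"
    and g: "g \<in> GL2" by auto
  have "iter_diff absF X (g # gs) (iter_diff absF X [zm] \<xi>) = iter_diff absF X [g] (iter_diff absF X gs (iter_diff absF X [zm] \<xi>))"
    by (rule iter_diff_Cons)
  also have "\<dots> = iter_diff absF X [g] (iter_diff absF X [zm] (iter_diff absF X gs \<xi>))" unfolding I ..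
  also have "\<dots> = iter_diff absF X [zm] (iter_diff absF X [g] (iter_diff absF X gs \<xi>))" using comm1[OF X g] by simp
  also have "\<dots> = iter_diff absF X [zm] (iter_diff absF X (g # gs) \<xi>)" using iter_diff_Cons[of absF X g gs \<xi>] by simp
  finally show ?case .
qed

lemma commrep:
  assumes X: "ginv X" and gs: "set gs \<subseteq> GL2"
  shows "iter_diff absF X gs (iter_diff absF X (replicate n zm) \<xi>) = iter_diff absF X (replicate n zm) (iter_diff absF X gs \<xi>)"
proof (induction n arbitrary: \<xi>)
  case 0 then show ?case by simp
next
  case (Suc n)
  have "iter_diff absF X gs (iter_diff absF X (replicate (Suc n) zm) \<xi>) = iter_diff absF X gs (iter_diff absF X [zm] (iter_diff absF X (replicate n zm) \<xi>))"
    using iter_diff_Cons[of absF X zm "replicate n zm" \<xi>] by simp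
  also have "\<dots> = iter_diff absF X [zm] (iter_diff absF X gs (iter_diff absF X (replicate n zm) \<xi>))" by (rule commgs[OF X gs])
  also have "\<dots> = iter_diff absF X [zm] (iter_diff absF X (replicate n zm) (iter_diff absF X gs \<xi>))" unfolding Suc ..
  also have "\<dots> = iter_diff absF X (replicate (Suc n) zm) (iter_diff absF X gs \<xi>)"
    using iter_diff_Cons[of absF X zm "replicate n zm"] by simp
  finally show ?case .
qed

lemma restr_vanish: "restr1 absF \<eta> = (\<lambda>f. 0) \<Longrightarrow> f \<in> SX absF O1 \<Longrightarrow> \<eta> f = 0"
  unfolding restr1_def by (metis)

lemma surj_lemma:
  assumes \<xi>: "\<xi> \<in> SdualX absF O1"
    and H: "\<forall>gs. length gs = Suc k \<and> set gs \<subseteq> GL2 \<longrightarrow> iter_diff absF O1 gs \<xi> = (\<lambda>f. 0)"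
  shows "\<exists>\<xi>'. \<xi>' \<in> SdualX absF O1bar \<and> restr1 absF \<xi>' = \<xi> \<and>
     (\<forall>gs. length gs = Suc k \<and> set gs \<subseteq> GL2 \<longrightarrow> iter_diff absF O1bar gs \<xi>' = (\<lambda>f. 0))"
proof -
  define \<xi>0 where "\<xi>0 = (\<lambda>f. if f \<in> SX absF O1bar then \<xi> (\<lambda>M. f M - f 0 * phi M) else 0)"
  have \<xi>0S: "\<xi>0 \<in> SdualX absF O1bar"
    unfolding SdualX_def
  proof (intro CollectI conjI ballI allI impI)
    fix f assume "f \<notin> SX absF O1bar" then show "\<xi>0 f = 0" unfolding \<xi>0_def by simp
  next
    fix f h c a assume f: "f \<in> SX absF O1bar" and h: "h \<in> SX absF O1bar"
    have l: "(\<lambda>M. c * f M + a * h M) \<in> SX absF O1bar" by (rule SX_lin[OF f h])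
    have cf: "(\<lambda>M. f M - f 0 * phi M) \<in> SX absF O1" and ch: "(\<lambda>M. h M - h 0 * phi M) \<in> SX absF O1"
      using SX_corr f h by auto
    have e: "(\<lambda>M. (c * f M + a * h M) - (c * f 0 + a * h 0) * phi M) = (\<lambda>M. c * (f M - f 0 * phi M) + a * (h M - h 0 * phi M))"
      by (simp add: algebra_simps)
    have "\<xi> (\<lambda>M. c * (f M - f 0 * phi M) + a * (h M - h 0 * phi M)) = c * \<xi> (\<lambda>M. f M - f 0 * phi M) + a * \<xi> (\<lambda>M. h M - h 0 * phi M)"
      using \<xi>[unfolded SdualX_def, THEN CollectD, THEN conjunct2, rule_format, OF cf ch, of c a] by simp
    then show "\<xi>0 (\<lambda>M. c * f M + a * h M) = c * \<xi>0 f + a * \<xi>0 h"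
      unfolding \<xi>0_def using l f h e by simp
  qed
  have r0: "restr1 absF \<xi>0 = \<xi>"
  proof
    fix f show "restr1 absF \<xi>0 f = \<xi> f"
    proof (cases "f \<in> SX absF O1")
      case True
      then have "f 0 = 0" using zero_notin_O1 unfolding SX_def by blast
      moreover have "f \<in> SX absF O1bar" using True SX_O1_sub by blast
      ultimately show ?thesis unfolding restr1_def \<xi>0_def using True by simp
    next
      case False then show ?thesis unfolding restr1_def using \<xi> unfolding SdualX_def by simp
    qed
  qed
  define lam where "lam gs = iter_diff absF O1bar gs \<xi>0 phi" for gs
  have It: "iter_diff absF O1bar gs \<xi>0 = (\<lambda>f. lam gs * delta f)"
    if gs: "length gs = Suc k" "set gs \<subseteq> GL2" for gs
  proof -
    have S: "iter_diff absF O1bar gs \<xi>0 \<in> SdualX absF O1bar" by (rule iter_diff_SdualX[OF \<xi>0S ginv_O1bar gs(2)])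
    have "restr1 absF (iter_diff absF O1bar gs \<xi>0) = (\<lambda>f. 0)"
      unfolding restr_iter[OF gs(2)] r0 using H gs by blast
    then show ?thesis unfolding lam_def using kernel[OF S] restr_vanish by blast
  qed
  define e where "e = replicate (Suc k) zm"
  have eG: "length e = Suc k" "set e \<subseteq> GL2" unfolding e_def using zm_GL2 by auto
  have ce: "chi e \<noteq> 0" unfolding e_def by (rule chi_rep)
  define c where "c = - lam e / chi e"
  define \<xi>' where "\<xi>' = (\<lambda>f. \<xi>0 f + c * delta f)"
  have S': "\<xi>' \<in> SdualX absF O1bar" unfolding \<xi>'_def by (rule SdualX_lin[OF \<xi>0S delta_SdualX])
  have r': "restr1 absF \<xi>' = \<xi>"
  proof
    fix f show "restr1 absF \<xi>' f = \<xi> f"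
      using fun_cong[OF r0, of f] fun_cong[OF restr_delta, of f] unfolding restr1_def \<xi>'_def
      by (cases "f \<in> SX absF O1") auto
  qed
  have iz: "iter_diff absF O1bar gs \<xi>' = (\<lambda>f. 0)" if gs: "length gs = Suc k" "set gs \<subseteq> GL2" for gs
  proof -
    have d1: "iter_diff absF O1bar gs delta = (\<lambda>f. chi gs * delta f)"
      using iter_delta[OF gs(2), of 1] by simp
    have A: "iter_diff absF O1bar (e @ gs) \<xi>0 = (\<lambda>f. (lam gs * chi e) * delta f)"
      unfolding iter_diff_append It[OF gs] using iter_delta[OF eG(2), of "lam gs"] by simp
    have B: "iter_diff absF O1bar (gs @ e) \<xi>0 = (\<lambda>f. (lam e * chi gs) * delta f)"
      unfolding iter_diff_append It[OF eG] using iter_delta[OF gs(2), of "lam e"] by simp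
    have "iter_diff absF O1bar (e @ gs) \<xi>0 = iter_diff absF O1bar (gs @ e) \<xi>0"
      unfolding iter_diff_append e_def by (rule commrep[OF ginv_O1bar gs(2), symmetric])
    then have "lam gs * chi e = lam e * chi gs" using A B fun_cong[of _ _ phi] delta_phi by fastforce
    then have z: "lam gs + c * chi gs = 0" unfolding c_def using ce by (simp add: field_simps)
    have "iter_diff absF O1bar gs \<xi>' = (\<lambda>f. iter_diff absF O1bar gs \<xi>0 f + c * iter_diff absF O1bar gs delta f)"
      unfolding \<xi>'_def by (rule iter_diff_lin)
    also have "\<dots> = (\<lambda>f. (lam gs + c * chi gs) * delta f)" unfolding It[OF gs] d1 by (simp add: algebra_simps)
    finally show ?thesis using z by simp
  qed
  show ?thesis using S' r' iz by blast
qed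

end


context NLA begin

lemma gen_mono:
  assumes H: "\<forall>gs. length gs = Suc k \<and> set gs \<subseteq> GL2 \<longrightarrow> iter_diff absF X gs \<xi> = (\<lambda>f. 0)"
    and kK: "k \<le> K" and gs: "length gs = Suc K" "set gs \<subseteq> GL2"
  shows "iter_diff absF X gs \<xi> = (\<lambda>f. 0)"
proof -
  have d: "length (drop (K - k) gs) = Suc k" "set (drop (K - k) gs) \<subseteq> GL2"
    using gs kK set_drop_subset[of "K - k" gs] by auto
  have "iter_diff absF X gs \<xi> = iter_diff absF X (take (K - k) gs) (iter_diff absF X (drop (K - k) gs) \<xi>)"
    using iter_diff_append[of absF X "take (K - k) gs" "drop (K - k) gs" \<xi>] by simp
  also have "\<dots> = (\<lambda>f. 0)" using H d by (simp add: iter_diff_zero)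
  finally show ?thesis .
qed

lemma Sinv_gen: "\<xi> \<in> Sinv absF X \<Longrightarrow> \<xi> \<in> Sgeninv absF X"
  unfolding Sinv_def Sgeninv_def
proof (clarsimp, intro exI[of _ 0] allI impI)
  fix gs :: "'a mat2 list" assume a: "\<xi> \<in> SdualX absF X" "\<forall>g\<in>GL2. act1 absF X g \<xi> = \<xi>" and gs: "length gs = Suc 0 \<and> set gs \<subseteq> GL2"
  then obtain g where "gs = [g]" by (cases gs) auto
  then show "iter_diff absF X gs \<xi> = (\<lambda>f. 0)" using a gs by simp
qed

lemma inj_gen:
  assumes a: "\<xi>1 \<in> Sgeninv absF O1bar" "\<xi>2 \<in> Sgeninv absF O1bar" and r: "restr1 absF \<xi>1 = restr1 absF \<xi>2"
  shows "\<xi>1 = \<xi>2"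
proof -
  obtain k1 where k1: "\<forall>gs. length gs = Suc k1 \<and> set gs \<subseteq> GL2 \<longrightarrow> iter_diff absF O1bar gs \<xi>1 = (\<lambda>f. 0)"
    using a(1) unfolding Sgeninv_def by blast
  obtain k2 where k2: "\<forall>gs. length gs = Suc k2 \<and> set gs \<subseteq> GL2 \<longrightarrow> iter_diff absF O1bar gs \<xi>2 = (\<lambda>f. 0)"
    using a(2) unfolding Sgeninv_def by blast
  have S: "\<xi>1 \<in> SdualX absF O1bar" "\<xi>2 \<in> SdualX absF O1bar" using a unfolding Sgeninv_def by auto
  define \<eta> where "\<eta> = (\<lambda>f. \<xi>1 f + (-1) * \<xi>2 f)"
  have \<eta>S: "\<eta> \<in> SdualX absF O1bar" unfolding \<eta>_def by (rule SdualX_lin[OF S])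
  have v: "\<eta> f = 0" if "f \<in> SX absF O1" for f
    using fun_cong[OF r, of f] that unfolding restr1_def \<eta>_def by simp
  define c where "c = \<eta> phi"
  have ke: "\<eta> = (\<lambda>f. c * delta f)" unfolding c_def by (rule kernel[OF \<eta>S v])
  define e where "e = replicate (Suc (k1 + k2)) zm"
  have eG: "length e = Suc (k1 + k2)" "set e \<subseteq> GL2" unfolding e_def using zm_GL2 by auto
  have z1: "iter_diff absF O1bar e \<xi>1 = (\<lambda>f. 0)" by (rule gen_mono[OF k1 _ eG]) simp
  have z2: "iter_diff absF O1bar e \<xi>2 = (\<lambda>f. 0)" by (rule gen_mono[OF k2 _ eG]) simp
  have "iter_diff absF O1bar e \<eta> = (\<lambda>f. iter_diff absF O1bar e \<xi>1 f + (-1) * iter_diff absF O1bar e \<xi>2 f)"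
    unfolding \<eta>_def by (rule iter_diff_lin)
  then have z: "iter_diff absF O1bar e \<eta> = (\<lambda>f. 0)" using z1 z2 by simp
  have "iter_diff absF O1bar e \<eta> = iter_diff absF O1bar e (\<lambda>f. c * delta f)" using ke by (rule arg_cong)
  also have "\<dots> = (\<lambda>f. (c * chi e) * delta f)" by (rule iter_delta[OF eG(2)])
  finally have "(\<lambda>f. 0) = (\<lambda>f. (c * chi e) * delta f)" using z by simp
  from fun_cong[OF this, of phi] have "(c * chi e) * delta phi = 0" by simp
  moreover have "chi e \<noteq> 0" unfolding e_def by (rule chi_rep)
  ultimately have "c = 0" using delta_phi by simp
  then have "\<eta> = (\<lambda>f. 0)" using ke by simp
  then have "\<And>f. \<xi>1 f + (-1) * \<xi>2 f = 0" unfolding \<eta>_def by (metis)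
  then show ?thesis by (simp add: fun_eq_iff)
qed

lemma image_gen: "\<xi> \<in> Sgeninv absF O1bar \<Longrightarrow> restr1 absF \<xi> \<in> Sgeninv absF O1"
proof -
  assume "\<xi> \<in> Sgeninv absF O1bar"
  then obtain k where S: "\<xi> \<in> SdualX absF O1bar" and H: "\<forall>gs. length gs = Suc k \<and> set gs \<subseteq> GL2 \<longrightarrow> iter_diff absF O1bar gs \<xi> = (\<lambda>f. 0)"
    unfolding Sgeninv_def by blast
  have "iter_diff absF O1 gs (restr1 absF \<xi>) = (\<lambda>f. 0)" if gs: "length gs = Suc k" "set gs \<subseteq> GL2" for gs
  proof -
    have "iter_diff absF O1 gs (restr1 absF \<xi>) = restr1 absF (iter_diff absF O1bar gs \<xi>)" by (rule restr_iter[OF gs(2), symmetric])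
    also have "\<dots> = restr1 absF (\<lambda>f. 0)" using H gs by simp
    also have "\<dots> = (\<lambda>f. 0)" unfolding restr1_def by simp
    finally show ?thesis .
  qed
  then show ?thesis using restr_SdualX[OF S] unfolding Sgeninv_def by blast
qed

lemma image_inv: "\<xi> \<in> Sinv absF O1bar \<Longrightarrow> restr1 absF \<xi> \<in> Sinv absF O1"
proof -
  assume a: "\<xi> \<in> Sinv absF O1bar"
  then have S: "\<xi> \<in> SdualX absF O1bar" and H: "\<forall>g\<in>GL2. act1 absF O1bar g \<xi> = \<xi>" unfolding Sinv_def by auto
  have "act1 absF O1 g (restr1 absF \<xi>) = restr1 absF \<xi>" if g: "g \<in> GL2" for g
    using restr_act[OF g, of \<xi>] H g by simp
  then show ?thesis using restr_SdualX[OF S] unfolding Sinv_def by blast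
qed

lemma surj_gen: "\<xi> \<in> Sgeninv absF O1 \<Longrightarrow> \<exists>\<xi>'\<in>Sgeninv absF O1bar. restr1 absF \<xi>' = \<xi>"
proof -
  assume "\<xi> \<in> Sgeninv absF O1"
  then obtain k where S: "\<xi> \<in> SdualX absF O1" and H: "\<forall>gs. length gs = Suc k \<and> set gs \<subseteq> GL2 \<longrightarrow> iter_diff absF O1 gs \<xi> = (\<lambda>f. 0)"
    unfolding Sgeninv_def by blast
  from surj_lemma[OF S H] obtain \<xi>' where "\<xi>' \<in> SdualX absF O1bar" "restr1 absF \<xi>' = \<xi>"
     "\<forall>gs. length gs = Suc k \<and> set gs \<subseteq> GL2 \<longrightarrow> iter_diff absF O1bar gs \<xi>' = (\<lambda>f. 0)" by blast
  then show ?thesis unfolding Sgeninv_def by blast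
qed

lemma surj_inv: "\<xi> \<in> Sinv absF O1 \<Longrightarrow> \<exists>\<xi>'\<in>Sinv absF O1bar. restr1 absF \<xi>' = \<xi>"
proof -
  assume a: "\<xi> \<in> Sinv absF O1"
  then have "\<xi> \<in> Sgeninv absF O1" by (rule Sinv_gen)
  have S: "\<xi> \<in> SdualX absF O1" using a unfolding Sinv_def by blast
  have H: "\<forall>gs. length gs = Suc 0 \<and> set gs \<subseteq> GL2 \<longrightarrow> iter_diff absF O1 gs \<xi> = (\<lambda>f. 0)"
  proof (intro allI impI)
    fix gs :: "'a mat2 list" assume gs: "length gs = Suc 0 \<and> set gs \<subseteq> GL2"
    then obtain g where g: "gs = [g]" by (cases gs) auto
    then have "g \<in> GL2" using gs by simp
    then show "iter_diff absF O1 gs \<xi> = (\<lambda>f. 0)" using a g unfolding Sinv_def by simp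
  qed
  from surj_lemma[OF S H] obtain \<xi>' where x: "\<xi>' \<in> SdualX absF O1bar" "restr1 absF \<xi>' = \<xi>"
     "\<forall>gs. length gs = Suc 0 \<and> set gs \<subseteq> GL2 \<longrightarrow> iter_diff absF O1bar gs \<xi>' = (\<lambda>f. 0)" by blast
  have "act1 absF O1bar g \<xi>' = \<xi>'" if g: "g \<in> GL2" for g
  proof -
    have "iter_diff absF O1bar [g] \<xi>' = (\<lambda>f. 0)" using x(3)[rule_format, of "[g]"] g by simp
    then have "\<And>f. act1 absF O1bar g \<xi>' f - \<xi>' f = 0" by (metis iter_diff.simps)
    then show ?thesis by (simp add: fun_eq_iff)
  qed
  then show ?thesis using x unfolding Sinv_def by blast
qed

lemma main:
  "bij_betw (restr1 absF) (Sinv absF O1bar) (Sinv absF O1)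
       \<and> bij_betw (restr1 absF) (Sgeninv absF O1bar) (Sgeninv absF O1)"
proof
  show "bij_betw (restr1 absF) (Sinv absF O1bar) (Sinv absF O1)"
    unfolding bij_betw_def
  proof
    show "inj_on (restr1 absF) (Sinv absF O1bar)"
      using inj_gen Sinv_gen unfolding inj_on_def by blast
    show "restr1 absF ` Sinv absF O1bar = Sinv absF O1"
      using image_inv surj_inv by blast
  qed
  show "bij_betw (restr1 absF) (Sgeninv absF O1bar) (Sgeninv absF O1)"
    unfolding bij_betw_def
  proof
    show "inj_on (restr1 absF) (Sgeninv absF O1bar)"
      using inj_gen unfolding inj_on_def by blast
    show "restr1 absF ` Sgeninv absF O1bar = Sgeninv absF O1"
      using image_gen surj_gen by blast
  qed
qed

end

theorem lemma2p4:
  fixes absF :: "'a::field_char_0 \<Rightarrow> real"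
  assumes "nonarch_local_field absF"
    and "normalized_abs absF"
  shows "bij_betw (restr1 absF) (Sinv absF O1bar) (Sinv absF O1)
       \<and> bij_betw (restr1 absF) (Sgeninv absF O1bar) (Sgeninv absF O1)"
proof -
  interpret NLA absF by unfold_locales (rule assms(1))
  show ?thesis by (rule main)
qed

end
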